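(* Let $T=(V,E,r)$ be a finite rooted tree embedded in $\mathbb R^n$ as described in the context, and let $i,j,k$ be three adjacent nodes with $i<j<k$ (i.e. $i$ is the parent of $j$ and $j$ is the parent of $k$). Assume that Assumption A1 holds: for all $x,x'\in[x_i,x_j]$ and $y,y'\in[x_j,x_k]$, $\ell([x,y])\le\ell([x',y'])\Rightarrow\|x-y\|\le\|x'-y'\|$. Then $$\langle\mu_{[x_i,x_j]},\mu_{[x_j,x_k]}\rangle_{W^\ast}=o\Big(\|\mu_{[x_i,x_j]}\|^2_{W^\ast}+\|\mu_{[x_j,x_k]}\|^2_{W^\ast}\Big)$$ as $\sigma_x,\sigma_t\to0$ with $\sigma_x\asymp\sigma_t$, where $\sigma_x\asymp\sigma_t$ means there exist constants $k_1,k_2>0$ with $k_1\sigma_x\le\sigma_t\le k_2\sigma_x$.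
   Context: Rooted tree and embedding. $T=(V,E,r)$ is a finite rooted tree with root $r$; $i<j$ means $i$ is the parent of $j$. The tree is embedded in $\mathbb R^n$ via an injective map $i\mapsto x_i\in\mathbb R^n$ and a map sending each edge $(i,j)$ to a smooth curve segment $[x_i,x_j]$ joining $x_i$ and $x_j$ (not necessarily a line segment); embeddings of two edges intersect only if the edges share a node, and only at the image of that node. The embedding of the path from $r$ to any node is a smooth, regular curve of finite length, oriented from the root to the end node; $[x,y]$ denotes the sub-arc between two points on a common embedded root-to-node path. $\ell(\gamma)$ is arc length, $\vec t(x)\in\mathbb S^{n-1}$ the unit oriented tangent vector at $x$. For $\sigma_x,\sigma_t>0$ and smooth oriented curves $X,Y$ of finite length, $$\langle\mu_X,\mu_Y\rangle_{W^\ast}=\iint_{X\times Y} e^{-\|x-y\|^2/\sigma_x^2}\,e^{-\|\vec t(x)-\vec t(y)\|^2/\sigma_t^2}\,d\ell(x)\,d\ell(y),\qquad \|\mu_X\|^2_{W^\ast}=\langle\mu_X,\mu_X\rangle_{W^\ast}$$ (the oriented-varifold inner product induced by the Gaussian tensor-product kernel with parameters $\sigma_x,\sigma_t$). *)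

theory Defs
  imports "HOL-Analysis.Analysis" "HOL-Library.Landau_Symbols"
begin

fun vderiv_n :: "nat \<Rightarrow> (real \<Rightarrow> 'a::real_normed_vector) \<Rightarrow> real \<Rightarrow> 'a" where
  "vderiv_n 0 f = f"
| "vderiv_n (Suc k) f = (\<lambda>t. vector_derivative (vderiv_n k f) (at t))"

definition smooth_curve_on :: "real set \<Rightarrow> (real \<Rightarrow> 'a::real_normed_vector) \<Rightarrow> bool" where
  "smooth_curve_on U f \<longleftrightarrow> open U \<and> (\<forall>k. \<forall>t\<in>U. vderiv_n k f differentiable (at t))"

definition unit_tangent :: "(real \<Rightarrow> 'a::real_normed_vector) \<Rightarrow> real \<Rightarrow> 'a" where
  "unit_tangent g s = sgn (vector_derivative g (at s))"

definition arc_len :: "(real \<Rightarrow> 'a::real_normed_vector) \<Rightarrow> real \<Rightarrow> real \<Rightarrow> real" where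
  "arc_len g s t = integral {min s t..max s t} (\<lambda>u. norm (vector_derivative g (at u)))"

text \<open>Oriented varifold inner product (Gaussian kernels) of the oriented curves
  g restricted to [a,b] and h restricted to [c,d], written via the parametrizations:
  d ell(x) = norm g'(s) ds.\<close>
definition varifold_inner ::
  "real \<Rightarrow> real \<Rightarrow> (real \<Rightarrow> 'a::real_inner) \<Rightarrow> real \<Rightarrow> real \<Rightarrow> (real \<Rightarrow> 'a) \<Rightarrow> real \<Rightarrow> real \<Rightarrow> real" where
  "varifold_inner sx st g a b h c d =
     integral {a..b} (\<lambda>s. integral {c..d} (\<lambda>t.
        exp (- (norm (g s - h t))\<^sup>2 / sx\<^sup>2) *
        exp (- (norm (unit_tangent g s - unit_tangent h t))\<^sup>2 / st\<^sup>2) *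
        norm (vector_derivative g (at s)) * norm (vector_derivative h (at t))))"

definition varifold_norm2 :: "real \<Rightarrow> real \<Rightarrow> (real \<Rightarrow> 'a::real_inner) \<Rightarrow> real \<Rightarrow> real \<Rightarrow> real" where
  "varifold_norm2 sx st g a b = varifold_inner sx st g a b g a b"

text \<open>Filter for (sigma_x, sigma_t) \<rightarrow> (0,0) with sigma_x, sigma_t > 0 and
  k1 sigma_x \<le> sigma_t \<le> k2 sigma_x.\<close>
definition comparable_to_zero :: "real \<Rightarrow> real \<Rightarrow> (real \<times> real) filter" where
  "comparable_to_zero k1 k2 =
     at (0, 0) within {p. 0 < fst p \<and> 0 < snd p \<and> k1 * fst p \<le> snd p \<and> snd p \<le> k2 * fst p}"

end

theory Submission
  imports Defs
begin

lemma lip_bound: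
  fixes f :: "real \<Rightarrow> 'a::real_normed_vector"
  assumes der: "\<forall>t\<in>{a..c}. (f has_vector_derivative f' t) (at t)"
    and cont: "continuous_on {a..c} f'"
  shows "\<exists>L\<ge>0. \<forall>s\<in>{a..c}. \<forall>t\<in>{a..c}. norm (f s - f t) \<le> L * \<bar>s - t\<bar>"
proof -
  have "compact (f' ` {a..c})" by (intro compact_continuous_image cont) auto
  then obtain B where B: "B > 0" "\<forall>x\<in>f' ` {a..c}. norm x \<le> B"
    using compact_imp_bounded bounded_pos by metis
  have "norm (f s - f t) \<le> B * norm (s - t)" if "s \<in> {a..c}" "t \<in> {a..c}" for s t
  proof (rule differentiable_bound[where f' = "\<lambda>x h. h *\<^sub>R f' x"])
    show "convex {a..c}" by simp
    show "(f has_derivative (\<lambda>h. h *\<^sub>R f' x)) (at x within {a..c})" if "x \<in> {a..c}" for x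
      using der that unfolding has_vector_derivative_def by (blast intro: has_derivative_at_withinI)
    show "onorm (\<lambda>h. h *\<^sub>R f' x) \<le> B" if "x \<in> {a..c}" for x
    proof -
      have "onorm (\<lambda>h. h *\<^sub>R f' x) = onorm (\<lambda>h::real. h) * norm (f' x)"
        using onorm_scaleR_left[OF bounded_linear_ident, of "f' x"] by simp
      then show ?thesis using B that by (simp add: onorm_id)
    qed
  qed (use that in auto)
  then show ?thesis using B by (intro exI[of _ B]) auto
qed

lemma sgn_diff:
  fixes u v :: "'a::real_normed_vector"
  assumes "u \<noteq> 0" "v \<noteq> 0"
  shows "norm (sgn u - sgn v) \<le> 2 * norm (u - v) / norm u"
proof -
  have nu: "norm u > 0" using assms by simp
  have nv: "norm v > 0" using assms by simp
  have e: "sgn u - sgn v = (1 / norm u) *\<^sub>R (u - v) + ((1 / norm u) - (1 / norm v)) *\<^sub>R v"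
    by (simp add: sgn_div_norm algebra_simps divide_inverse)
  have "norm (((1 / norm u) - (1 / norm v)) *\<^sub>R v) = \<bar>norm v - norm u\<bar> / norm u"
    using nu nv by (simp add: field_simps abs_mult)
  also have "\<dots> \<le> norm (u - v) / norm u"
    using nu norm_triangle_ineq3[of v u] by (intro divide_right_mono) (auto simp: norm_minus_commute)
  finally have "norm (sgn u - sgn v) \<le> norm (u - v) / norm u + norm (u - v) / norm u"
    unfolding e using nu by (intro order_trans[OF norm_triangle_ineq] add_mono) auto
  then show ?thesis by simp
qed

lemma exp_sq_le: "exp (- (x::real)\<^sup>2) \<le> exp 1 * exp (- 2 * x)"
proof -
  have "- x\<^sup>2 \<le> 1 + (- 2 * x)" using sum_power2_ge_zero[of "x - 1" 0] by (simp add: power2_eq_square algebra_simps)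
  then show ?thesis by (simp add: exp_add[symmetric])
qed

lemma cont_fst:
  assumes "continuous_on I g" "R \<subseteq> I \<times> J"
  shows "continuous_on R (\<lambda>p. g (fst p))"
  by (rule continuous_on_compose2[OF assms(1) continuous_on_fst[OF continuous_on_id]]) (use assms(2) in auto)

lemma cont_snd:
  assumes "continuous_on J g" "R \<subseteq> I \<times> J"
  shows "continuous_on R (\<lambda>p. g (snd p))"
  by (rule continuous_on_compose2[OF assms(1) continuous_on_snd[OF continuous_on_id]]) (use assms(2) in auto)

lemma far_bound:
  fixes \<gamma> :: "real \<Rightarrow> 'a::real_normed_vector"
  assumes cg: "continuous_on {a..c} \<gamma>" and inj: "inj_on \<gamma> {a..c}"
    and sub: "{p..q} \<subseteq> {a..c}" "{r..w} \<subseteq> {a..c}" and lt: "q < r" and ne: "p \<le> q" "r \<le> w"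
  shows "\<exists>d>0. \<forall>s\<in>{p..q}. \<forall>t\<in>{r..w}. d \<le> norm (\<gamma> t - \<gamma> s)"
proof -
  let ?R = "{p..q} \<times> {r..w}"
  have R: "?R \<subseteq> {a..c} \<times> {a..c}" using sub by auto
  have "continuous_on ?R (\<lambda>x. norm (\<gamma> (snd x) - \<gamma> (fst x)))"
    by (intro continuous_intros cont_fst[OF cg R] cont_snd[OF cg R])
  moreover have "compact ?R" by (intro compact_Times compact_Icc)
  moreover have "?R \<noteq> {}" using ne by auto
  ultimately obtain x where x: "x \<in> ?R" "\<forall>y\<in>?R. norm (\<gamma> (snd x) - \<gamma> (fst x)) \<le> norm (\<gamma> (snd y) - \<gamma> (fst y))"
    using continuous_attains_inf by blast
  have "fst x \<noteq> snd x" using x(1) lt by auto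
  moreover have "fst x \<in> {a..c}" "snd x \<in> {a..c}" using x(1) R by auto
  ultimately have "\<gamma> (snd x) \<noteq> \<gamma> (fst x)" using inj by (metis inj_onD)
  then have "norm (\<gamma> (snd x) - \<gamma> (fst x)) > 0" by simp
  then show ?thesis using x(2) by (intro exI[of _ "norm (\<gamma> (snd x) - \<gamma> (fst x))"]) force
qed

lemma near_bound:
  fixes \<gamma> :: "real \<Rightarrow> 'a::real_inner"
  assumes der: "\<forall>x\<in>{s..t}. (\<gamma> has_vector_derivative D x) (at x)"
    and st: "s \<le> t"
    and close: "\<forall>x\<in>{s..t}. norm (D x - v) \<le> norm v / 2"
  shows "(t - s) * (norm v / 2) \<le> norm (\<gamma> t - \<gamma> s)"
proof -
  have d: "((\<lambda>u. \<gamma> u \<bullet> v) has_derivative (\<lambda>h. h * (D x \<bullet> v))) (at x within {s..t})"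
    if "x \<in> {s..t}" for x
  proof -
    have "(\<gamma> has_derivative (\<lambda>h. h *\<^sub>R D x)) (at x within {s..t})"
      using der that unfolding has_vector_derivative_def by (blast intro: has_derivative_at_withinI)
    from has_derivative_inner[OF this has_derivative_const[of v]]
    show ?thesis by (simp add: algebra_simps)
  qed
  obtain x where x: "x \<in> {s..t}" "\<gamma> t \<bullet> v - \<gamma> s \<bullet> v = (t - s) * (D x \<bullet> v)"
    using mvt_very_simple[OF st d] by auto
  have "D x \<bullet> v = v \<bullet> v + (D x - v) \<bullet> v" by (simp add: algebra_simps)
  moreover have "\<bar>(D x - v) \<bullet> v\<bar> \<le> norm (D x - v) * norm v" by (rule Cauchy_Schwarz_ineq2)
  moreover have "norm (D x - v) * norm v \<le> (norm v / 2) * norm v"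
    using close x(1) by (intro mult_right_mono) auto
  moreover have "v \<bullet> v = norm v * norm v" by (simp add: dot_square_norm power2_eq_square)
  ultimately have Dv: "D x \<bullet> v \<ge> norm v * (norm v / 2)" by (simp add: abs_le_iff)
  have "(t - s) * (norm v / 2) * norm v \<le> (t - s) * (D x \<bullet> v)"
    using Dv st by (metis mult.commute mult.left_commute mult_left_mono diff_ge_0_iff_ge)
  also have "\<dots> = (\<gamma> t - \<gamma> s) \<bullet> v" using x(2) by (simp add: inner_diff_left)
  also have "\<dots> \<le> norm (\<gamma> t - \<gamma> s) * norm v" by (rule norm_cauchy_schwarz)
  finally have *: "(t - s) * (norm v / 2) * norm v \<le> norm (\<gamma> t - \<gamma> s) * norm v" .
  show ?thesis
  proof (cases "v = 0")
    case True then show ?thesis by simp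
  next
    case False
    then show ?thesis using * by (simp add: mult_le_cancel_right)
  qed
qed

lemma sep_bound:
  fixes \<gamma> :: "real \<Rightarrow> 'a::real_inner"
  assumes abc: "a < b" "b < c"
    and der: "\<forall>t\<in>{a..c}. (\<gamma> has_vector_derivative D t) (at t)"
    and contD: "continuous_on {a..c} D" and Db: "D b \<noteq> 0"
    and inj: "inj_on \<gamma> {a..c}"
  shows "\<exists>m>0. \<forall>s\<in>{a..b}. \<forall>t\<in>{b..c}. m * (t - s) \<le> norm (\<gamma> t - \<gamma> s)"
proof -
  define v where "v = D b"
  have nv: "norm v / 2 > 0" using Db v_def by simp
  have cg: "continuous_on {a..c} \<gamma>"
    using der by (meson continuous_at_imp_continuous_on has_vector_derivative_continuous)
  obtain d where d: "d > 0" "\<forall>x'\<in>{a..c}. dist x' b < d \<longrightarrow> dist (D x') (D b) < norm v / 2"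
    using contD abc nv unfolding continuous_on_iff by (metis atLeastAtMost_iff less_imp_le)
  define \<delta> where "\<delta> = min d (min (b - a) (c - b)) / 2"
  have \<delta>: "\<delta> > 0" "\<delta> < d" "\<delta> < b - a" "\<delta> < c - b" using d abc by (auto simp: \<delta>_def)
  obtain d1 where d1: "d1 > 0" "\<forall>s\<in>{a..b-\<delta>}. \<forall>t\<in>{b..c}. d1 \<le> norm (\<gamma> t - \<gamma> s)"
    using far_bound[OF cg inj, of a "b - \<delta>" b c] \<delta> abc by auto
  obtain d2 where d2: "d2 > 0" "\<forall>s\<in>{a..b}. \<forall>t\<in>{b+\<delta>..c}. d2 \<le> norm (\<gamma> t - \<gamma> s)"
    using far_bound[OF cg inj, of a b "b + \<delta>" c] \<delta> abc by auto
  define m where "m = min (norm v / 2) (min (d1 / (c - a)) (d2 / (c - a)))"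
  have m: "m > 0" using nv d1 d2 abc by (auto simp: m_def)
  have "m * (t - s) \<le> norm (\<gamma> t - \<gamma> s)" if st: "s \<in> {a..b}" "t \<in> {b..c}" for s t
  proof -
    have ts: "0 \<le> t - s" "t - s \<le> c - a" using st by auto
    consider "s \<le> b - \<delta>" | "t \<ge> b + \<delta>" | "b - \<delta> < s" "t < b + \<delta>" by linarith
    then show ?thesis
    proof cases
      case 1
      have "m * (t - s) \<le> (d1 / (c - a)) * (t - s)" using ts by (intro mult_right_mono) (auto simp: m_def)
      also have "\<dots> \<le> (d1 / (c - a)) * (c - a)" using ts d1 abc by (intro mult_left_mono) auto
      also have "\<dots> = d1" using abc by simp
      also have "\<dots> \<le> norm (\<gamma> t - \<gamma> s)" using d1 1 st by auto
      finally show ?thesis .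
    next
      case 2
      have "m * (t - s) \<le> (d2 / (c - a)) * (t - s)" using ts by (intro mult_right_mono) (auto simp: m_def)
      also have "\<dots> \<le> (d2 / (c - a)) * (c - a)" using ts d2 abc by (intro mult_left_mono) auto
      also have "\<dots> = d2" using abc by simp
      also have "\<dots> \<le> norm (\<gamma> t - \<gamma> s)" using d2 2 st by auto
      finally show ?thesis .
    next
      case 3
      have sub: "{s..t} \<subseteq> {a..c}" using st by auto
      have close: "\<forall>x\<in>{s..t}. norm (D x - v) \<le> norm v / 2"
      proof
        fix x assume x: "x \<in> {s..t}"
        then have "dist x b < d" using 3 \<delta> st by (auto simp: dist_real_def)
        then show "norm (D x - v) \<le> norm v / 2" using d(2) x sub by (force simp: dist_norm v_def)
      qed
      have "m \<le> norm v / 2" unfolding m_def by linarith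
      then have "m * (t - s) \<le> (norm v / 2) * (t - s)" using ts by (intro mult_right_mono) auto
      also have "\<dots> \<le> norm (\<gamma> t - \<gamma> s)"
        using near_bound[of s t \<gamma> D v] der sub close ts by (auto simp: mult.commute)
      finally show ?thesis .
    qed
  qed
  then show ?thesis using m by blast
qed

lemma exp_int_le1:
  fixes lam p q :: real
  assumes lam: "lam > 0" and pq: "p \<le> q"
  shows "integral {p..q} (\<lambda>s. exp (- lam * (q - s))) \<le> 1 / lam"
proof -
  have "((\<lambda>s. exp (- lam * (q - s))) has_integral (exp (- lam * (q - q)) / lam - exp (- lam * (q - p)) / lam)) {p..q}"
  proof (rule fundamental_theorem_of_calculus[OF pq])
    fix x assume "x \<in> {p..q}"
    have "((\<lambda>s. exp (- lam * (q - s)) / lam) has_real_derivative (exp (- lam * (q - x)) * lam / lam)) (at x)"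
      by (auto intro!: derivative_eq_intros)
    then show "((\<lambda>s. exp (- lam * (q - s)) / lam) has_vector_derivative exp (- lam * (q - x))) (at x within {p..q})"
      using lam by (simp add: has_real_derivative_iff_has_vector_derivative[symmetric] has_field_derivative_at_within)
  qed
  then have "integral {p..q} (\<lambda>s. exp (- lam * (q - s))) = 1 / lam - exp (- lam * (q - p)) / lam"
    by (simp add: integral_unique)
  also have "\<dots> \<le> 1 / lam" using lam by simp
  finally show ?thesis .
qed

lemma exp_int_le2:
  fixes lam p q :: real
  assumes lam: "lam > 0" and pq: "p \<le> q"
  shows "integral {p..q} (\<lambda>t. exp (- lam * (t - p))) \<le> 1 / lam"
proof -
  have "((\<lambda>t. exp (- lam * (t - p))) has_integral ((- exp (- lam * (q - p)) / lam) - (- exp (- lam * (p - p)) / lam))) {p..q}"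
  proof (rule fundamental_theorem_of_calculus[OF pq])
    fix x assume "x \<in> {p..q}"
    have "((\<lambda>t. - exp (- lam * (t - p)) / lam) has_real_derivative (- (exp (- lam * (x - p)) * (- lam)) / lam)) (at x)"
      by (auto intro!: derivative_eq_intros)
    then show "((\<lambda>t. - exp (- lam * (t - p)) / lam) has_vector_derivative exp (- lam * (x - p))) (at x within {p..q})"
      using lam by (simp add: has_real_derivative_iff_has_vector_derivative[symmetric] has_field_derivative_at_within)
  qed
  then have "integral {p..q} (\<lambda>t. exp (- lam * (t - p))) = 1 / lam - exp (- lam * (q - p)) / lam"
    by (simp add: integral_unique)
  also have "\<dots> \<le> 1 / lam" using lam by simp
  finally show ?thesis .
qed

lemma cont_slice:
  assumes "continuous_on ({a..b} \<times> {c..d}) (\<lambda>(s, t). F s t)" "s \<in> {a..b}"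
  shows "continuous_on {c..d} (F s)"
proof -
  have "continuous_on {c..d} ((\<lambda>(s, t). F s t) \<circ> (\<lambda>t. (s, t)))"
    by (rule continuous_on_compose[OF _ continuous_on_subset[OF assms(1)]])
       (use assms(2) in \<open>auto intro!: continuous_intros\<close>)
  then show ?thesis by (simp add: o_def)
qed

lemma cont_outer:
  fixes F :: "real \<Rightarrow> real \<Rightarrow> real"
  assumes "continuous_on ({a..b} \<times> {c..d}) (\<lambda>(s, t). F s t)"
  shows "continuous_on {a..b} (\<lambda>s. integral {c..d} (F s))"
  using integral_continuous_on_param[of "{a..b}" c d F] assms by (simp add: cbox_interval)

lemma dbl_le:
  fixes F :: "real \<Rightarrow> real \<Rightarrow> real"
  assumes cF: "continuous_on ({a..b} \<times> {c..d}) (\<lambda>(s, t). F s t)"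
    and c1: "continuous_on {a..b} g1" and c2: "continuous_on {c..d} g2"
    and le: "\<forall>s\<in>{a..b}. \<forall>t\<in>{c..d}. F s t \<le> K * g1 s * g2 t"
  shows "integral {a..b} (\<lambda>s. integral {c..d} (\<lambda>t. F s t)) \<le> K * integral {a..b} g1 * integral {c..d} g2"
proof -
  have "integral {a..b} (\<lambda>s. integral {c..d} (\<lambda>t. F s t)) \<le> integral {a..b} (\<lambda>s. integral {c..d} (\<lambda>t. K * g1 s * g2 t))"
  proof (rule integral_le)
    show "(\<lambda>s. integral {c..d} (\<lambda>t. F s t)) integrable_on {a..b}"
      using cont_outer[OF cF] by (intro integrable_continuous_interval) simp
    show "(\<lambda>s. integral {c..d} (\<lambda>t. K * g1 s * g2 t)) integrable_on {a..b}"
      by (simp add: integrable_continuous_interval continuous_intros c1)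
    fix s assume s: "s \<in> {a..b}"
    show "integral {c..d} (\<lambda>t. F s t) \<le> integral {c..d} (\<lambda>t. K * g1 s * g2 t)"
      using le s cont_slice[OF cF s] c2
      by (intro integral_le) (auto intro!: integrable_continuous_interval continuous_intros)
  qed
  also have "\<dots> = integral {a..b} (\<lambda>s. (K * integral {c..d} g2) * g1 s)"
    by (simp add: algebra_simps)
  also have "\<dots> = K * integral {a..b} g1 * integral {c..d} g2"
    by (simp add: algebra_simps)
  finally show ?thesis .
qed

lemma dbl_ge:
  fixes F :: "real \<Rightarrow> real \<Rightarrow> real"
  assumes cF: "continuous_on ({a..b} \<times> {a..b}) (\<lambda>(s, t). F s t)"
    and h: "0 < h" "h \<le> (b - a) / 2" and mu: "0 \<le> mu"
    and nn: "\<forall>s\<in>{a..b}. \<forall>t\<in>{a..b}. 0 \<le> F s t"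
    and lo: "\<forall>s\<in>{a..b}. \<forall>t\<in>{a..b}. \<bar>s - t\<bar> \<le> h \<longrightarrow> mu \<le> F s t"
  shows "((b - a) / 2) * h * mu \<le> integral {a..b} (\<lambda>s. integral {a..b} (\<lambda>t. F s t))"
proof -
  define G where "G s = integral {a..b} (\<lambda>t. F s t)" for s
  have cG: "continuous_on {a..b} G" using cont_outer[OF cF] by (simp add: G_def)
  have G0: "\<forall>s\<in>{a..b}. 0 \<le> G s" unfolding G_def using nn by (auto intro!: integral_nonneg integrable_continuous_interval cont_slice[OF cF])
  have Gl: "h * mu \<le> G s" if s: "s \<in> {a..b - h}" for s
  proof -
    have sub: "{s..s+h} \<subseteq> {a..b}" using s h by auto
    have cs: "continuous_on {a..b} (F s)" using cont_slice[OF cF] s h by auto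
    have "h * mu = integral {s..s+h} (\<lambda>t. mu)" using h by simp
    also have "\<dots> \<le> integral {s..s+h} (\<lambda>t. F s t)"
      using lo sub s h by (intro integral_le integrable_continuous_interval continuous_on_subset[OF cs sub])
        (auto)
    also have "\<dots> \<le> G s" unfolding G_def
      using sub nn s h by (intro integral_subset_le integrable_continuous_interval continuous_on_subset[OF cs sub])
        (auto intro: continuous_on_subset[OF cs] integrable_continuous_interval cs)
    finally show ?thesis .
  qed
  have sub2: "{a..b-h} \<subseteq> {a..b}" using h by auto
  have "((b - a) / 2) * (h * mu) \<le> (b - h - a) * (h * mu)" using h mu by (intro mult_right_mono) auto
  then have "((b - a) / 2) * h * mu \<le> (b - h - a) * (h * mu)" by (simp add: mult.assoc)
  also have "\<dots> = integral {a..b-h} (\<lambda>s. h * mu)" using h by simp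
  also have "\<dots> \<le> integral {a..b-h} G"
    using Gl by (intro integral_le integrable_continuous_interval continuous_on_subset[OF cG sub2]) auto
  also have "\<dots> \<le> integral {a..b} G"
    using G0 by (intro integral_subset_le sub2 integrable_continuous_interval continuous_on_subset[OF cG sub2] cG)
  finally show ?thesis by (simp add: G_def[abs_def])
qed

lemma upper_pt:
  fixes x y mp G H n1 n2 Mx s t b :: real
  assumes x: "x > 0" and mp: "mp > 0" and st: "0 \<le> t - s" and G: "mp * (t - s) \<le> G"
    and n1: "0 \<le> n1" "n1 \<le> Mx" and n2: "0 \<le> n2" "n2 \<le> Mx"
  shows "exp (- G\<^sup>2 / x\<^sup>2) * exp (- H\<^sup>2 / y\<^sup>2) * n1 * n2
    \<le> (Mx\<^sup>2 * exp 1) * exp (- (2 * mp / x) * (b - s)) * exp (- (2 * mp / x) * (t - b))"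
proof -
  have q0: "0 \<le> mp * (t - s) / x" using mp st x by auto
  have "(mp * (t - s) / x)\<^sup>2 \<le> (G / x)\<^sup>2"
    using q0 G x by (intro power_mono) (auto simp: divide_right_mono)
  then have "exp (- G\<^sup>2 / x\<^sup>2) \<le> exp (- (mp * (t - s) / x)\<^sup>2)"
    by (simp add: power_divide)
  also have "\<dots> \<le> exp 1 * exp (- 2 * (mp * (t - s) / x))" by (rule exp_sq_le)
  also have "exp (- 2 * (mp * (t - s) / x)) = exp (- (2 * mp / x) * (b - s)) * exp (- (2 * mp / x) * (t - b))"
    using x by (simp add: exp_add[symmetric] field_simps)
  finally have e1: "exp (- G\<^sup>2 / x\<^sup>2) \<le> exp 1 * (exp (- (2 * mp / x) * (b - s)) * exp (- (2 * mp / x) * (t - b)))" .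
  have e2: "exp (- H\<^sup>2 / y\<^sup>2) \<le> 1" by simp
  have nn: "n1 * n2 \<le> Mx\<^sup>2" using n1 n2 by (simp add: power2_eq_square mult_mono)
  have "exp (- G\<^sup>2 / x\<^sup>2) * exp (- H\<^sup>2 / y\<^sup>2) * (n1 * n2)
     \<le> (exp 1 * (exp (- (2 * mp / x) * (b - s)) * exp (- (2 * mp / x) * (t - b)))) * 1 * Mx\<^sup>2"
    using e1 e2 nn n1 n2 by (intro mult_mono) auto
  then show ?thesis by (simp add: algebra_simps)
qed

lemma lower_pt:
  fixes x y k1 s t G H Mg K m0 n1 n2 :: real
  assumes x: "x > 0" and y: "y > 0" and k1: "k1 > 0" "k1 * x \<le> y" and st: "\<bar>s - t\<bar> \<le> x"
    and G: "0 \<le> G" "G \<le> Mg * \<bar>s - t\<bar>" and H: "0 \<le> H" "H \<le> K * \<bar>s - t\<bar>"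
    and MK: "0 \<le> Mg" "0 \<le> K" and m0: "0 \<le> m0" "m0 \<le> n1" "m0 \<le> n2"
  shows "exp (- Mg\<^sup>2) * exp (- (K / k1)\<^sup>2) * m0 * m0 \<le> exp (- G\<^sup>2 / x\<^sup>2) * exp (- H\<^sup>2 / y\<^sup>2) * n1 * n2"
proof -
  have "G \<le> Mg * x" using G MK st by (meson mult_left_mono order_trans)
  then have "G / x \<le> Mg" using x by (simp add: divide_le_eq mult.commute)
  then have "(G / x)\<^sup>2 \<le> Mg\<^sup>2" using G x by (intro power_mono) auto
  then have e1: "exp (- Mg\<^sup>2) \<le> exp (- G\<^sup>2 / x\<^sup>2)" by (simp add: power_divide)
  have "H \<le> K * x" using H MK st by (meson mult_left_mono order_trans)
  also have "\<dots> \<le> K * (y / k1)" using k1 MK by (intro mult_left_mono) (auto simp: le_divide_eq mult.commute)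
  finally have "H / y \<le> K / k1" using y k1 by (simp add: divide_le_eq field_simps)
  then have "(H / y)\<^sup>2 \<le> (K / k1)\<^sup>2" using H y by (intro power_mono) auto
  then have e2: "exp (- (K / k1)\<^sup>2) \<le> exp (- H\<^sup>2 / y\<^sup>2)" by (simp add: power_divide)
  have "exp (- Mg\<^sup>2) * exp (- (K / k1)\<^sup>2) * m0 * m0 \<le> exp (- G\<^sup>2 / x\<^sup>2) * exp (- H\<^sup>2 / y\<^sup>2) * n1 * n2"
    using e1 e2 m0 by (intro mult_mono) auto
  then show ?thesis .
qed

lemma dbl_nonneg:
  fixes F :: "real \<Rightarrow> real \<Rightarrow> real"
  assumes cF: "continuous_on ({a..b} \<times> {c..d}) (\<lambda>(s, t). F s t)"
    and nn: "\<forall>s\<in>{a..b}. \<forall>t\<in>{c..d}. 0 \<le> F s t"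
  shows "0 \<le> integral {a..b} (\<lambda>s. integral {c..d} (\<lambda>t. F s t))"
  using cont_outer[OF cF] nn
  by (auto intro!: integral_nonneg integrable_continuous_interval cont_slice[OF cF])

theorem lemma1:
  fixes \<gamma> :: "real \<Rightarrow> 'a::euclidean_space"
    and U :: "real set" and a b c k1 k2 :: real
  assumes abc: "a < b" "b < c"
    and smooth: "smooth_curve_on U \<gamma>" "{a..c} \<subseteq> U"
    and regular: "\<forall>t\<in>{a..c}. vector_derivative \<gamma> (at t) \<noteq> 0"
    and inj: "inj_on \<gamma> {a..c}"
    and A1: "\<forall>s\<in>{a..b}. \<forall>s'\<in>{a..b}. \<forall>t\<in>{b..c}. \<forall>t'\<in>{b..c}.
               arc_len \<gamma> s t \<le> arc_len \<gamma> s' t' \<longrightarrow> norm (\<gamma> s - \<gamma> t) \<le> norm (\<gamma> s' - \<gamma> t')"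
    and k: "0 < k1" "0 < k2"
  shows "(\<lambda>p. varifold_inner (fst p) (snd p) \<gamma> a b \<gamma> b c)
           \<in> smallo (comparable_to_zero k1 k2)
             (\<lambda>p. varifold_norm2 (fst p) (snd p) \<gamma> a b + varifold_norm2 (fst p) (snd p) \<gamma> b c)"
proof -
  define D where "D = (\<lambda>t. vector_derivative \<gamma> (at t))"
  define D2 where "D2 = (\<lambda>t. vector_derivative D (at t))"
  have Deq: "\<And>t. vector_derivative \<gamma> (at t) = D t" by (simp add: D_def)
  have sm: "\<And>k t. t \<in> {a..c} \<Longrightarrow> vderiv_n k \<gamma> differentiable (at t)"
    using smooth unfolding smooth_curve_on_def by blast
  have der: "\<forall>t\<in>{a..c}. (\<gamma> has_vector_derivative D t) (at t)"
    using sm[of _ 0] by (auto simp: D_def vector_derivative_works)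
  have der2: "\<forall>t\<in>{a..c}. (D has_vector_derivative D2 t) (at t)"
    using sm[of _ "Suc 0"] by (auto simp: D_def D2_def vector_derivative_works)
  have cg: "continuous_on {a..c} \<gamma>"
    using der by (meson continuous_at_imp_continuous_on has_vector_derivative_continuous)
  have cD: "continuous_on {a..c} D"
    using der2 by (meson continuous_at_imp_continuous_on has_vector_derivative_continuous)
  have cD2: "continuous_on {a..c} D2"
    using sm[of _ "Suc (Suc 0)"]
    by (intro continuous_at_imp_continuous_on) (auto simp: D_def D2_def differentiable_imp_continuous_within)
  have Dnz: "\<forall>t\<in>{a..c}. D t \<noteq> 0" using regular by (simp add: D_def)
  obtain Mg where Mg: "Mg \<ge> 0" "\<forall>s\<in>{a..c}. \<forall>t\<in>{a..c}. norm (\<gamma> s - \<gamma> t) \<le> Mg * \<bar>s - t\<bar>"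
    using lip_bound[OF der cD] by blast
  obtain L where L: "L \<ge> 0" "\<forall>s\<in>{a..c}. \<forall>t\<in>{a..c}. norm (D s - D t) \<le> L * \<bar>s - t\<bar>"
    using lip_bound[OF der2 cD2] by blast
  have ne: "{a..c} \<noteq> {}" using abc by auto
  obtain t0 where t0: "t0 \<in> {a..c}" "\<forall>t\<in>{a..c}. norm (D t0) \<le> norm (D t)"
    using continuous_attains_inf[OF compact_Icc ne continuous_on_norm[OF cD]] by blast
  define m0 where "m0 = norm (D t0)"
  have m0: "m0 > 0" "\<forall>t\<in>{a..c}. m0 \<le> norm (D t)" using t0 Dnz by (auto simp: m0_def)
  obtain t1 where t1: "t1 \<in> {a..c}" "\<forall>t\<in>{a..c}. norm (D t) \<le> norm (D t1)"
    using continuous_attains_sup[OF compact_Icc ne continuous_on_norm[OF cD]] by blast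
  define Mx where "Mx = norm (D t1)"
  have Mx: "\<forall>t\<in>{a..c}. norm (D t) \<le> Mx" using t1 by (auto simp: Mx_def)
  define T where "T = (\<lambda>t. sgn (D t))"
  have Teq: "\<And>t. unit_tangent \<gamma> t = T t" by (simp add: unit_tangent_def T_def D_def)
  define KT where "KT = 2 * L / m0"
  have KT: "KT \<ge> 0" using L m0 by (simp add: KT_def)
  have TL: "norm (T s - T t) \<le> KT * \<bar>s - t\<bar>" if "s \<in> {a..c}" "t \<in> {a..c}" for s t
  proof -
    have "norm (T s - T t) \<le> 2 * norm (D s - D t) / norm (D s)"
      unfolding T_def using Dnz that by (intro sgn_diff) auto
    also have "\<dots> \<le> 2 * (L * \<bar>s - t\<bar>) / m0"
      using L that m0 by (intro frac_le) auto
    finally show ?thesis by (simp add: KT_def)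
  qed
  have cT: "continuous_on {a..c} T" unfolding T_def using Dnz cD by (intro continuous_on_sgn) auto
  obtain mp where mp: "mp > 0" "\<forall>s\<in>{a..b}. \<forall>t\<in>{b..c}. mp * (t - s) \<le> norm (\<gamma> t - \<gamma> s)"
    using sep_bound[OF abc der cD _ inj] Dnz abc by auto
  define F where "F = (\<lambda>x y s t. exp (- (norm (\<gamma> s - \<gamma> t))\<^sup>2 / x\<^sup>2) *
        exp (- (norm (T s - T t))\<^sup>2 / y\<^sup>2) * norm (D s) * norm (D t))"
  have inner_eq: "varifold_inner x y \<gamma> p q \<gamma> r w = integral {p..q} (\<lambda>s. integral {r..w} (\<lambda>t. F x y s t))"
    for x y p q r w
    by (simp add: varifold_inner_def F_def Teq Deq)
  have cF: "continuous_on R (\<lambda>(s, t). F x y s t)" if R: "R \<subseteq> {a..c} \<times> {a..c}" and xy: "x \<noteq> 0" "y \<noteq> 0" for R x y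
  proof -
    have "continuous_on R (\<lambda>p. F x y (fst p) (snd p))" unfolding F_def
      by (intro continuous_intros cont_fst[OF cg R] cont_snd[OF cg R] cont_fst[OF cT R] cont_snd[OF cT R]
          cont_fst[OF cD R] cont_snd[OF cD R]) (use xy in auto)
    then show ?thesis by (simp add: case_prod_beta')
  qed
  have Fnn: "0 \<le> F x y s t" if "s \<in> {a..c}" "t \<in> {a..c}" for x y s t
    unfolding F_def by simp
  define mu where "mu = exp (- Mg\<^sup>2) * exp (- (KT / k1)\<^sup>2) * m0 * m0"
  have mu: "mu > 0" using m0 by (simp add: mu_def)
  define C2 where "C2 = (b - a) / 2 * mu"
  have C2: "C2 > 0" using mu abc by (simp add: C2_def)
  define C1 where "C1 = Mx\<^sup>2 * exp 1 * (1 / (2 * mp))\<^sup>2"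
  have C1: "C1 \<ge> 0" by (simp add: C1_def)
  define S where "S = {p::real\<times>real. 0 < fst p \<and> 0 < snd p \<and> k1 * fst p \<le> snd p \<and> snd p \<le> k2 * fst p}"
  have key: "norm (varifold_inner x y \<gamma> a b \<gamma> b c)
      \<le> e * norm (varifold_norm2 x y \<gamma> a b + varifold_norm2 x y \<gamma> b c)"
    if e: "e > 0" and x: "0 < x" "x \<le> (b - a) / 2" "x \<le> e * C2 / (C1 + 1)" and y: "0 < y" "k1 * x \<le> y"
    for e x y
  proof -
    have xy: "x \<noteq> 0" "y \<noteq> 0" using x y by auto
    define lam where "lam = 2 * mp / x"
    have lam: "lam > 0" using mp x by (simp add: lam_def)
    have cross_nn: "0 \<le> varifold_inner x y \<gamma> a b \<gamma> b c"
      unfolding inner_eq using abc by (intro dbl_nonneg cF xy) (auto intro: Fnn)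
    have "varifold_inner x y \<gamma> a b \<gamma> b c
        \<le> (Mx\<^sup>2 * exp 1) * integral {a..b} (\<lambda>s. exp (- lam * (b - s))) * integral {b..c} (\<lambda>t. exp (- lam * (t - b)))"
      unfolding inner_eq
    proof (rule dbl_le)
      show "continuous_on ({a..b} \<times> {b..c}) (\<lambda>(s, t). F x y s t)" using abc by (intro cF xy) auto
      show "continuous_on {a..b} (\<lambda>s. exp (- lam * (b - s)))" by (intro continuous_intros)
      show "continuous_on {b..c} (\<lambda>t. exp (- lam * (t - b)))" by (intro continuous_intros)
      show "\<forall>s\<in>{a..b}. \<forall>t\<in>{b..c}. F x y s t \<le> Mx\<^sup>2 * exp 1 * exp (- lam * (b - s)) * exp (- lam * (t - b))"
      proof (intro ballI)
        fix s t assume st: "s \<in> {a..b}" "t \<in> {b..c}"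
        have "mp * (t - s) \<le> norm (\<gamma> s - \<gamma> t)" using mp(2) st by (simp add: norm_minus_commute)
        then show "F x y s t \<le> Mx\<^sup>2 * exp 1 * exp (- lam * (b - s)) * exp (- lam * (t - b))"
          unfolding F_def lam_def using upper_pt[OF x(1) mp(1)] st Mx abc by auto
      qed
    qed
    also have "\<dots> \<le> (Mx\<^sup>2 * exp 1) * (x / (2 * mp)) * (x / (2 * mp))"
    proof -
      have i1: "integral {a..b} (\<lambda>s. exp (- lam * (b - s))) \<le> x / (2 * mp)"
        using exp_int_le1[OF lam, of a b] abc by (simp add: lam_def)
      have i2: "integral {b..c} (\<lambda>t. exp (- lam * (t - b))) \<le> x / (2 * mp)"
        using exp_int_le2[OF lam, of b c] abc by (simp add: lam_def)
      have n1: "0 \<le> integral {a..b} (\<lambda>s. exp (- lam * (b - s)))"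
        by (intro integral_nonneg integrable_continuous_interval continuous_intros) auto
      have n2: "0 \<le> integral {b..c} (\<lambda>t. exp (- lam * (t - b)))"
        by (intro integral_nonneg integrable_continuous_interval continuous_intros) auto
      have "0 \<le> Mx\<^sup>2 * exp 1 * (x / (2 * mp))" using x mp by simp
      then show ?thesis using i1 i2 n1 n2 by (intro mult_mono) auto
    qed
    also have "\<dots> = C1 * x * x" by (simp add: C1_def power2_eq_square field_simps)
    also have "\<dots> \<le> (C1 + 1) * x * x" using x by (intro mult_right_mono) auto
    also have "\<dots> \<le> (e * C2 / (C1 + 1) * (C1 + 1)) * x"
    proof -
      have "(C1 + 1) * x \<le> (C1 + 1) * (e * C2 / (C1 + 1))" using x C1 by (intro mult_left_mono) auto
      then show ?thesis using x by (intro mult_right_mono) (auto simp: mult.commute)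
    qed
    also have "\<dots> = e * (C2 * x)" using C1 by simp
    finally have up: "varifold_inner x y \<gamma> a b \<gamma> b c \<le> e * (C2 * x)" .
    have lo1: "C2 * x \<le> varifold_norm2 x y \<gamma> a b"
      unfolding varifold_norm2_def inner_eq
    proof -
      have "(b - a) / 2 * x * mu \<le> integral {a..b} (\<lambda>s. integral {a..b} (\<lambda>t. F x y s t))"
      proof (rule dbl_ge)
        show "continuous_on ({a..b} \<times> {a..b}) (\<lambda>(s, t). F x y s t)" using abc by (intro cF xy) auto
        show "\<forall>s\<in>{a..b}. \<forall>t\<in>{a..b}. 0 \<le> F x y s t" using abc by (auto intro: Fnn)
        show "\<forall>s\<in>{a..b}. \<forall>t\<in>{a..b}. \<bar>s - t\<bar> \<le> x \<longrightarrow> mu \<le> F x y s t"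
        proof (intro ballI impI)
          fix s t assume st: "s \<in> {a..b}" "t \<in> {a..b}" "\<bar>s - t\<bar> \<le> x"
          then have st': "s \<in> {a..c}" "t \<in> {a..c}" using abc by auto
          show "mu \<le> F x y s t" unfolding mu_def F_def
            by (rule lower_pt[OF x(1) y(1) k(1) y(2) st(3)])
               (use Mg(1) Mg(2) st' KT TL[OF st'] m0 in auto)
        qed
      qed (use x mu in auto)
      then show "C2 * x \<le> integral {a..b} (\<lambda>s. integral {a..b} (\<lambda>t. F x y s t))"
        by (simp add: C2_def algebra_simps)
    qed
    have lo2: "0 \<le> varifold_norm2 x y \<gamma> b c"
      unfolding varifold_norm2_def inner_eq using abc by (intro dbl_nonneg cF xy) (auto intro: Fnn)
    have "norm (varifold_inner x y \<gamma> a b \<gamma> b c) = varifold_inner x y \<gamma> a b \<gamma> b c" using cross_nn by simp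
    also have "\<dots> \<le> e * (varifold_norm2 x y \<gamma> a b + varifold_norm2 x y \<gamma> b c)"
      using up lo1 lo2 e by (smt (verit) mult_left_mono)
    also have "\<dots> = e * norm (varifold_norm2 x y \<gamma> a b + varifold_norm2 x y \<gamma> b c)"
      using lo1 lo2 C2 x by (smt (verit) real_norm_def mult_pos_pos)
    finally show ?thesis .
  qed
  show ?thesis
    unfolding smallo_def comparable_to_zero_def
  proof (intro CollectI allI impI)
    fix e :: real assume e: "e > 0"
    define d where "d = min ((b - a) / 2) (e * C2 / (C1 + 1))"
    have d: "d > 0" using abc e C2 C1 by (simp add: d_def)
    show "\<forall>\<^sub>F p in at (0, 0) within {p. 0 < fst p \<and> 0 < snd p \<and> k1 * fst p \<le> snd p \<and> snd p \<le> k2 * fst p}.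
        norm (varifold_inner (fst p) (snd p) \<gamma> a b \<gamma> b c)
        \<le> e * norm (varifold_norm2 (fst p) (snd p) \<gamma> a b + varifold_norm2 (fst p) (snd p) \<gamma> b c)"
      unfolding eventually_at
    proof (intro exI[of _ d] conjI ballI impI)
      show "d > 0" by (rule d)
      fix p :: "real \<times> real"
      assume p: "p \<in> {p. 0 < fst p \<and> 0 < snd p \<and> k1 * fst p \<le> snd p \<and> snd p \<le> k2 * fst p}"
        and pd: "p \<noteq> (0, 0) \<and> dist p (0, 0) < d"
      have "fst p \<le> dist p (0, 0)"
        using dist_fst_le[of p "(0,0)"] by (simp add: dist_real_def)
      then have "fst p < d" using pd by linarith
      then show "norm (varifold_inner (fst p) (snd p) \<gamma> a b \<gamma> b c)
        \<le> e * norm (varifold_norm2 (fst p) (snd p) \<gamma> a b + varifold_norm2 (fst p) (snd p) \<gamma> b c)"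
        using p by (intro key e) (auto simp: d_def)
    qed
  qed
qed

end
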